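(* Let $p,q\in\mathbb{N}$ with $q\ne0$, and suppose $x=p/q-1\in(-1,1)$ is regular for the sequence $n_j$ and $\lim_{j\to\infty}D_{n_j}(x)/n_j=L\in\overline{\mathbb{R}}$. Then $L$ is finite and $|L|=A(m^2/q^2)$ for some integer $m$ with $0\le m<q$. Moreover, there exists $j_0$ such that for all $j\ge j_0$, $(-1)^{\iota_{n_j}(x)}=\operatorname{sign}(L)$ and $|\rho_{n_j}(x)|=m/q$.
   Context: Nodes: $x_{k,n}:=2k/n-1$, $k=0,\dots,n$; $D_n(x)=\sum_{k=0}^n(-1)^k\frac{1}{x-x_{k,n}}$. $\iota_n(x):=\lfloor n(x+1)/2\rfloor$, $\rho_n(x):=n(x-x_{\iota_n(x),n})-1$. $A(y)=\sum_{k=0}^\infty(-1)^k\frac{4k+2}{(2k+1)^2-y}$ for $y\in[0,1)$. $\overline{\mathbb{R}}=\mathbb{R}\cup\{\pm\infty\}$ is the two-point compactification of $\mathbb{R}$. A sequence $n_j$ is a strictly increasing map $\mathbb{N}\to\mathbb{N}$; $x$ is regular for $n_j$ if there is $j_0$ with $x\notin\{x_{0,n_j},\dots,x_{n_j,n_j}\}$ for all $j\ge j_0$. *)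

theory Defs
  imports "HOL-Analysis.Analysis"
begin

definition node :: "nat \<Rightarrow> nat \<Rightarrow> real" where
  "node k n = 2 * real k / real n - 1"

definition D :: "nat \<Rightarrow> real \<Rightarrow> real" where
  "D n x = (\<Sum>k=0..n. (-1)^k * (1 / (x - node k n)))"

definition iota :: "nat \<Rightarrow> real \<Rightarrow> nat" where
  "iota n x = nat \<lfloor>real n * (x + 1) / 2\<rfloor>"

definition rho :: "nat \<Rightarrow> real \<Rightarrow> real" where
  "rho n x = real n * (x - node (iota n x) n) - 1"

definition A :: "real \<Rightarrow> real" where
  "A y = (\<Sum>k. (-1)^k * ((4 * real k + 2) / ((2 * real k + 1)^2 - y)))"

definition regular_for :: "real \<Rightarrow> (nat \<Rightarrow> nat) \<Rightarrow> bool" where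
  "regular_for x nj \<longleftrightarrow> (\<exists>j0. \<forall>j\<ge>j0. x \<notin> {node k (nj j) | k. k \<le> nj j})"

end

theory Submission
  imports Defs
begin


lemma alt_fin:
  fixes w :: "nat \<Rightarrow> real"
  assumes "\<And>i. 0 \<le> w i" "\<And>i. w (Suc i) \<le> w i"
  shows "0 \<le> (\<Sum>i<K. (-1)^i * w i) \<and> (\<Sum>i<K. (-1)^i * w i) \<le> w 0"
using assms proof (induction K arbitrary: w)
  case 0 thus ?case by simp
next
  case (Suc K)
  have IH: "0 \<le> (\<Sum>i<K. (-1)^i * w (Suc i)) \<and> (\<Sum>i<K. (-1)^i * w (Suc i)) \<le> w 1"
    using Suc.IH[of "\<lambda>i. w (Suc i)"] Suc.prems by auto
  have "(\<Sum>i<Suc K. (-1)^i * w i) = w 0 - (\<Sum>i<K. (-1)^i * w (Suc i))"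
    by (subst sum.lessThan_Suc_shift) (simp add: sum_negf)
  thus ?case using IH Suc.prems(1)[of 0] Suc.prems(2)[of 0] by auto
qed

lemma sum_split_nat: "(\<Sum>i<M+K. g i) = (\<Sum>i<M. g i) + (\<Sum>i<K. g (M+i))"
  for g :: "nat \<Rightarrow> 'a::comm_monoid_add"
  by (induction K) (simp_all add: add.assoc)

lemma alt_tail:
  fixes w :: "nat \<Rightarrow> real"
  assumes "\<And>i. 0 \<le> w i" "\<And>i. w (Suc i) \<le> w i" "M \<le> N"
  shows "\<bar>(\<Sum>i<N. (-1)^i * w i) - (\<Sum>i<M. (-1)^i * w i)\<bar> \<le> w M"
proof -
  obtain K where N: "N = M + K" using assms le_Suc_ex by blast
  have "(\<Sum>i<N. (-1)^i * w i) - (\<Sum>i<M. (-1)^i * w i) = (-1)^M * (\<Sum>i<K. (-1)^i * w (M+i))"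
    unfolding N sum_split_nat by (simp add: sum_distrib_left power_add mult.assoc)
  moreover have "0 \<le> (\<Sum>i<K. (-1)^i * w (M+i)) \<and> (\<Sum>i<K. (-1)^i * w (M+i)) \<le> w M"
    using alt_fin[of "\<lambda>i. w (M+i)" K] assms by auto
  ultimately show ?thesis by (simp add: abs_mult power_abs)
qed

lemma leib_tail:
  fixes w :: "nat \<Rightarrow> real"
  assumes "w \<longlonglongrightarrow> 0" "\<And>i. 0 \<le> w i" "\<And>i. w (Suc i) \<le> w i"
  shows "summable (\<lambda>i. (-1)^i * w i)"
    and "\<bar>(\<Sum>i. (-1)^i * w i) - (\<Sum>i<M. (-1)^i * w i)\<bar> \<le> w M"
proof -
  show s: "summable (\<lambda>i. (-1)^i * w i)" using summable_Leibniz'(1) assms by blast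
  have "(\<lambda>N. \<bar>(\<Sum>i<N. (-1)^i * w i) - (\<Sum>i<M. (-1)^i * w i)\<bar>) \<longlonglongrightarrow>
      \<bar>(\<Sum>i. (-1)^i * w i) - (\<Sum>i<M. (-1)^i * w i)\<bar>"
    by (intro tendsto_intros summable_LIMSEQ s)
  moreover have "\<forall>N\<ge>M. \<bar>(\<Sum>i<N. (-1)^i * w i) - (\<Sum>i<M. (-1)^i * w i)\<bar> \<le> w M"
    using alt_tail assms by blast
  ultimately show "\<bar>(\<Sum>i. (-1)^i * w i) - (\<Sum>i<M. (-1)^i * w i)\<bar> \<le> w M"
    using LIMSEQ_le_const2 by blast
qed

definition aa :: "real \<Rightarrow> nat \<Rightarrow> real" where
  "aa y k = (4 * real k + 2) / ((2 * real k + 1)^2 - y)"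

lemma den_pos: "y < 1 \<Longrightarrow> 0 < (2 * real k + 1)^2 - y"
proof -
  assume "y < 1"
  have "1 \<le> (2 * real k + 1)^2" by (simp add: one_le_power)
  thus ?thesis using \<open>y<1\<close> by linarith
qed

lemma aa_pos: "y < 1 \<Longrightarrow> 0 < aa y k"
  unfolding aa_def using den_pos[of y k] by simp

lemma aa_dec: assumes "0 \<le> y" "y < 1" shows "aa y (Suc k) < aa y k"
proof -
  define s where "s = 2 * real k + 1"
  have s1: "s \<ge> 1" unfolding s_def by simp
  have d1: "0 < s^2 - y" using den_pos[OF assms(2), of k] unfolding s_def .
  have d2: "0 < (s+2)^2 - y" using den_pos[OF assms(2), of "Suc k"] unfolding s_def by (simp add: algebra_simps)
  have e: "aa y (Suc k) = (2 * s + 4) / ((s+2)^2 - y)" "aa y k = 2 * s / (s^2-y)"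
    unfolding aa_def s_def by (simp_all add: algebra_simps)
  have "(2 * s + 4) * (s^2-y) < 2 * s * ((s+2)^2 - y)"
  proof -
    have "2 * s * ((s+2)^2 - y) - (2 * s + 4) * (s^2-y) = 4* s*(s+2) + 4*y"
      by (simp add: algebra_simps power2_eq_square)
    moreover have "0 < s*(s+2)" using s1 by simp
    ultimately show ?thesis using assms by linarith
  qed
  thus ?thesis unfolding e using d1 d2 by (simp add: divide_simps)
qed

lemma aa_le: assumes "0 \<le> y" "y < 1" "M \<ge> 1" shows "aa y M \<le> 1 / real M"
proof -
  have d: "0 < (2 * real M + 1)^2 - y" using den_pos[OF assms(2)] .
  have "(4 * real M + 2) * real M \<le> (2 * real M + 1)^2 - y"
  proof -
    have "(2 * real M + 1)^2 - y - (4 * real M + 2) * real M = 2 * real M + 1 - y"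
      by (simp add: algebra_simps power2_eq_square)
    thus ?thesis using assms by linarith
  qed
  thus ?thesis unfolding aa_def using d assms(3) by (simp add: divide_simps)
qed

lemma aa_lim: assumes "0 \<le> y" "y < 1" shows "aa y \<longlonglongrightarrow> 0"
proof (rule tendsto_sandwich[of "\<lambda>_. 0" _ _ "\<lambda>k. 1 / real k"])
  show "\<forall>\<^sub>F n in sequentially. 0 \<le> aa y n" using aa_pos[OF assms(2)] less_imp_le by (auto intro: always_eventually)
  show "\<forall>\<^sub>F n in sequentially. aa y n \<le> 1 / real n"
    using aa_le[OF assms] by (auto simp: eventually_sequentially)
  show "(\<lambda>k. 1 / real k) \<longlonglongrightarrow> 0" by (rule lim_inverse_n')
qed simp

lemma A_eq: "A y = (\<Sum>k. (-1)^k * aa y k)"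
  unfolding A_def aa_def ..

lemma A_tail: assumes "0 \<le> y" "y < 1"
  shows "\<bar>A y - (\<Sum>i<M. (-1)^i * aa y i)\<bar> \<le> aa y M"
  unfolding A_eq
  using leib_tail(2)[OF aa_lim[OF assms]] aa_pos[OF assms(2)] aa_dec[OF assms] less_imp_le by blast

lemma A_summable: assumes "0 \<le> y" "y < 1"
  shows "summable (\<lambda>k. (-1)^k * aa y k)"
  using leib_tail(1)[OF aa_lim[OF assms]] aa_pos[OF assms(2)] aa_dec[OF assms] less_imp_le by blast

lemma A_pos: assumes "0 \<le> y" "y < 1" shows "0 < A y"
  using A_tail[OF assms, of 1] aa_dec[OF assms, of 0] by simp

lemma fl: "0 < b \<Longrightarrow> 0 < d \<Longrightarrow> a * d < c * b \<Longrightarrow> a / b < c / (d::real)"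
  by (simp add: divide_simps)

lemma G_dec:
  fixes s y y' :: real
  assumes "s \<ge> 1" "0 \<le> y'" "y' < 1" "0 \<le> y" "y < 1"
  shows "(2 * s + 4) / (((s+2)^2 - y) * ((s+2)^2 - y')) < 2 * s / ((s^2 - y) * (s^2 - y'))"
proof -
  have d1: "0 < s^2 - y" "0 < s^2 - y'"
    using assms by (smt (verit) one_le_power)+
  have d2: "0 < (s+2)^2 - y" "0 < (s+2)^2 - y'"
    using assms by (smt (verit) one_le_power)+
  have key: "s * ((s+2)^2-y) * ((s+2)^2-y') - (s+2) * (s^2-y) * (s^2-y')
     = s * (s+2) * (6 * s^2 + 12 * s + 8) - 2 * (y+y') * s * (s+2) - 2 * y * y'"
    by (simp add: algebra_simps power2_eq_square)
  have p1: "s * (s+2) \<ge> 3"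
    using mult_mono[of 1 s 3 "s+2"] assms by simp
  have p2: "6 * s^2 + 12 * s + 8 \<ge> 26" using assms by (smt (verit) one_le_power)
  have p3: "s * (s+2) * (6 * s^2 + 12 * s + 8) \<ge> s * (s+2) * 26"
    using p1 p2 by (intro mult_left_mono) auto
  have p4: "2 * (y+y') * (s * (s+2)) \<le> 4 * (s * (s+2))"
    using assms p1 by (intro mult_right_mono) auto
  have p5: "y * y' \<le> 1" using assms by (smt (verit) mult_le_one)
  have "(s+2) * (s^2-y) * (s^2-y') < s * ((s+2)^2-y) * ((s+2)^2-y')"
    using key p1 p3 p4 p5 by (simp add: algebra_simps)
  hence "(2 * s + 4) * ((s^2 - y) * (s^2 - y')) < 2 * s * (((s+2)^2 - y) * ((s+2)^2 - y'))"
    by (simp add: algebra_simps)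
  thus ?thesis using d1 d2 by (intro fl) auto
qed

lemma A_mono: assumes "0 \<le> y'" "y' < y" "y < 1" shows "A y' < A y"
proof -
  have y0: "0 \<le> y" "y' < 1" using assms by auto
  define h where "h k = aa y k - aa y' k" for k
  define G where "G k = (4 * real k + 2) / (((2 * real k + 1)^2 - y) * ((2 * real k + 1)^2 - y'))" for k
  have hG: "h k = (y - y') * G k" for k
  proof -
    have "0 < (2 * real k + 1)^2 - y" "0 < (2 * real k + 1)^2 - y'"
      using den_pos assms y0 by auto
    thus ?thesis unfolding h_def G_def aa_def by (simp add: field_simps)
  qed
  have Gpos: "0 < G k" for k
    unfolding G_def using den_pos[of y k] den_pos[of y' k] assms y0 by simp
  have Gdec: "G (Suc k) < G k" for k
  proof -
    have "G (Suc k) = (2 * (2 * real k + 1) + 4) / ((((2 * real k + 1)+2)^2 - y) * (((2 * real k + 1)+2)^2 - y'))"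
      "G k = 2 * (2 * real k + 1) / (((2 * real k + 1)^2 - y) * ((2 * real k + 1)^2 - y'))"
      unfolding G_def by (simp_all add: algebra_simps)
    thus ?thesis using G_dec[of "2 * real k + 1" y' y] assms y0 by simp
  qed
  have yy: "0 < y - y'" using assms by simp
  have hpos: "0 \<le> h k" for k using hG[of k] Gpos[of k] yy by simp
  have hdec: "h (Suc k) \<le> h k" for k using hG[of k] hG[of "Suc k"] Gdec[of k] yy by simp
  have hdec0: "h 1 < h 0" using hG Gdec[of 0] yy by simp
  have hlim: "h \<longlonglongrightarrow> 0"
    unfolding h_def using tendsto_diff[OF aa_lim[OF y0(1) assms(3)] aa_lim[OF assms(1) y0(2)]] by simp
  have "A y - A y' = (\<Sum>k. (-1)^k * aa y k - (-1)^k * aa y' k)"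
    unfolding A_eq using suminf_diff[OF A_summable[OF y0(1) assms(3)] A_summable[OF assms(1) y0(2)]] by simp
  also have "\<dots> = (\<Sum>k. (-1)^k * h k)" unfolding h_def by (simp add: right_diff_distrib)
  finally have e: "A y - A y' = (\<Sum>k. (-1)^k * h k)" .
  have "\<bar>(\<Sum>k. (-1)^k * h k) - (\<Sum>i<1. (-1)^i * h i)\<bar> \<le> h 1"
    using leib_tail(2)[OF hlim hpos hdec] .
  thus ?thesis using e hdec0 by simp
qed

lemma neg1_pow_diff: "i \<le> (j::nat) \<Longrightarrow> ((-1::real)^(j - i)) = (-1)^j * (-1)^i"
proof -
  assume "i \<le> j"
  hence "(-1::real)^j = (-1)^(j-i) * (-1)^i" by (simp add: power_add[symmetric])
  hence "(-1::real)^j * (-1)^i = (-1)^(j-i) * ((-1)^i * (-1)^i)" by simp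
  also have "(-1::real)^i * (-1)^i = 1" by (simp add: power_add[symmetric] )
  finally show ?thesis by simp
qed

lemma tri3: "\<bar>U - Um\<bar> \<le> a \<Longrightarrow> \<bar>V - Vm\<bar> \<le> b \<Longrightarrow> \<bar>Av - P\<bar> \<le> c \<Longrightarrow> P = Um + Vm
  \<Longrightarrow> \<bar>U + V - Av\<bar> \<le> a + b + (c::real)"
  by (simp add: abs_le_iff)

lemma main_est:
  fixes n p q :: nat and x :: real
  assumes q: "q \<noteq> 0" and x: "x = real p / real q - 1" and xl: "-1 < x" and xu: "x < 1"
    and n: "n > 0" and reg: "\<forall>k\<le>n. x \<noteq> node k n"
  shows "\<exists>m<q. \<bar>rho n x\<bar> = real m / real q \<and>
     \<bar>D n x / real n - (-1)^iota n x * A (real m^2/real q^2)\<bar> \<le> 4 * real q / real n"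
proof -
  define t where "t = real n * (x+1) / 2"
  define \<iota> where "\<iota> = iota n x"
  have t2: "2 * real q * t = real n * real p" unfolding t_def x using q by (simp add: field_simps)
  have tpos: "0 < t" unfolding t_def using xl n by simp
  have tn: "t < real n" unfolding t_def using xu n by simp
  have ri: "real \<iota> = of_int \<lfloor>t\<rfloor>" unfolding \<iota>_def iota_def t_def[symmetric] using tpos by simp
  have il: "real \<iota> \<le> t" "t < real \<iota> + 1" using ri by linarith+
  have in_: "\<iota> < n" using il tn by linarith
  have tne: "t \<noteq> real \<iota>"
  proof
    assume "t = real \<iota>"
    hence "x = node \<iota> n" unfolding node_def t_def using n by (simp add: field_simps)
    thus False using reg in_ by auto
  qed
  define f where "f = t - real \<iota>"
  have f01: "0 < f" "f < 1" unfolding f_def using il tne by auto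
  have rho: "rho n x = 2 * f - 1"
    unfolding rho_def node_def f_def t_def \<iota>_def[symmetric] using n by (simp add: field_simps)
  define r where "r = int (n * p) - 2 * int q * int \<iota>"
  have rr: "real_of_int r = 2 * real q * f" unfolding r_def f_def
    using t2 by (simp add: algebra_simps)
  have qpos: "0 < real q" using q by simp
  have r0: "0 < r" "r < 2 * int q"
  proof -
    have "0 < real_of_int r" "real_of_int r < 2 * real q" using rr f01 qpos by simp_all
    thus "0 < r" "r < 2 * int q" by linarith+
  qed
  define m where "m = nat \<bar>r - int q\<bar>"
  have mq: "m < q" unfolding m_def using r0 by auto
  have rm: "real m = \<bar>real_of_int r - real q\<bar>" unfolding m_def by simp
  have rhom: "\<bar>rho n x\<bar> = real m / real q"
  proof -
    have "2 * real q * f - real q = real q * (2 * f - 1)" by (simp add: algebra_simps)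
    hence "\<bar>2 * real q * f - real q\<bar> = real q * \<bar>2 * f - 1\<bar>" using qpos by (simp add: abs_mult)
    thus ?thesis unfolding rm rr rho using qpos by simp
  qed
  have rho2: "(rho n x)^2 = real m^2 / real q^2"
    by (metis power2_abs power_divide rhom)
  define y where "y = (rho n x)^2"
  have y01: "0 \<le> y" "y < 1" unfolding y_def rho using f01
    by (auto simp: abs_less_iff abs_square_less_1)
  define g where "g k = (-1::real)^k / (2 * (t - real k))" for k
  define u where "u i = 1 / (2 * (f + real i))" for i
  define v where "v i = 1 / (2 * (1 - f + real i))" for i
  have Dsum: "D n x / real n = (\<Sum>k<Suc n. g k)"
  proof -
    have "D n x / real n = (\<Sum>k\<in>{0..n}. (-1)^k * (1 / (x - node k n)) / real n)"
      unfolding D_def by (simp add: sum_divide_distrib)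
    also have "\<dots> = (\<Sum>k\<in>{0..n}. g k)"
    proof (rule sum.cong)
      fix k assume "k \<in> {0..n}"
      have "real n * (x - node k n) = 2 * (t - real k)"
        unfolding node_def t_def using n by (simp add: field_simps)
      thus "(-1)^k * (1 / (x - node k n)) / real n = g k" unfolding g_def
        by (metis (no_types, lifting) divide_divide_eq_left mult.commute times_divide_eq_right
            mult.right_neutral)
    qed simp
    finally show ?thesis by (simp add: atLeast0AtMost lessThan_Suc_atMost)
  qed
  have split: "(\<Sum>k<Suc n. g k) = (\<Sum>k<\<iota>+1. g k) + (\<Sum>i<n-\<iota>. g (\<iota>+1+i))"
  proof -
    have "Suc n = (\<iota>+1) + (n-\<iota>)" using in_ by simp
    thus ?thesis by (simp only: sum_split_nat)
  qed
  have U: "(\<Sum>k<\<iota>+1. g k) = (-1)^\<iota> * (\<Sum>i<\<iota>+1. (-1)^i * u i)"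
  proof -
    have "(\<Sum>k<\<iota>+1. g k) = (\<Sum>i<\<iota>+1. g (\<iota>+1 - Suc i))"
      by (rule sum.nat_diff_reindex[symmetric])
    also have "\<dots> = (\<Sum>i<\<iota>+1. (-1)^\<iota> * ((-1)^i * u i))"
    proof (rule sum.cong)
      fix i assume "i \<in> {..<\<iota>+1}"
      hence ii: "i \<le> \<iota>" by simp
      have "t - real (\<iota> - i) = f + real i" unfolding f_def using ii by (simp add: of_nat_diff)
      thus "g (\<iota>+1 - Suc i) = (-1)^\<iota> * ((-1)^i * u i)"
        unfolding g_def u_def using neg1_pow_diff[OF ii] by simp
    qed simp
    finally show ?thesis by (simp only: sum_distrib_left)
  qed
  have V: "(\<Sum>i<n-\<iota>. g (\<iota>+1+i)) = (-1)^\<iota> * (\<Sum>i<n-\<iota>. (-1)^i * v i)"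
  proof -
    have "g (\<iota>+1+i) = (-1)^\<iota> * ((-1)^i * v i)" for i
    proof -
      define w where "w = 1 - f + real i"
      have w0: "w > 0" unfolding w_def using f01 by simp
      have d: "2 * (t - real (\<iota>+1+i)) = - (2 * w)" unfolding f_def w_def by simp
      have "g (\<iota>+1+i) = (-1)^(\<iota>+1+i) / (- (2 * w))" unfolding g_def d ..
      also have "\<dots> = (-1)^\<iota> * ((-1)^i * (1 / (2 * w)))" using w0 by (simp add: field_simps power_add)
      finally show ?thesis unfolding v_def w_def .
    qed
    thus ?thesis by (simp only: sum_distrib_left)
  qed
  define M where "M = min (\<iota>+1) (n-\<iota>)"
  have uv: "u i + v i = aa y i" for i
  proof -
    have a: "0 < f + real i" "0 < 1 - f + real i" using f01 by auto
    have "(2 * real i + 1)^2 - y = 4 * (f + real i) * (1 - f + real i)"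
      unfolding y_def rho by (simp add: algebra_simps power2_eq_square)
    thus ?thesis unfolding aa_def u_def v_def using a by (simp add: field_simps)
  qed
  have upos: "0 \<le> u i" and udec: "u (Suc i) \<le> u i" for i
    unfolding u_def using f01 by (auto simp: divide_simps)
  have vpos: "0 \<le> v i" and vdec: "v (Suc i) \<le> v i" for i
    unfolding v_def using f01 by (auto simp: divide_simps)
  have M1: "M \<ge> 1" unfolding M_def using in_ by simp
  have Mbound: "real n / (2 * real q) \<le> real M"
  proof -
    have p1: "1 \<le> p" using xl x qpos by (cases p) auto
    have p2: "p + 1 \<le> 2 * q" using xu x qpos by (simp add: field_simps)
    have tt: "t = real n * real p / (2 * real q)" using t2 qpos by (simp add: field_simps)
    have "real n * 1 \<le> real n * real p" using p1 by (intro mult_left_mono) auto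
    hence "real n / (2 * real q) \<le> t" unfolding tt using qpos
      by (intro divide_right_mono) auto
    moreover have "real n / (2 * real q) \<le> real n - t"
    proof -
      have "real n - t = real n * (2 * real q - real p) / (2 * real q)"
        unfolding tt using qpos by (simp add: field_simps)
      moreover have "1 \<le> 2 * real q - real p" using p2 by linarith
      moreover have "real n * 1 \<le> real n * (2 * real q - real p)"
        using \<open>1 \<le> 2 * real q - real p\<close> by (intro mult_left_mono) auto
      ultimately show ?thesis using qpos
        by (metis divide_right_mono less_eq_real_def mult.right_neutral zero_less_mult_iff zero_less_numeral)
    qed
    ultimately show ?thesis unfolding M_def using il in_ by (auto simp: of_nat_diff)
  qed
  have uM: "u M \<le> 1 / (2 * real M)" unfolding u_def using f01 M1
    by (simp add: frac_le)
  have vM: "v M \<le> 1 / (2 * real M)" unfolding v_def using f01 M1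
    by (simp add: frac_le)
  have aM: "aa y M \<le> 1 / real M" using aa_le[OF y01 M1] .
  have e1: "\<bar>(\<Sum>i<\<iota>+1. (-1)^i * u i) - (\<Sum>i<M. (-1)^i * u i)\<bar> \<le> u M"
    using alt_tail[of u M "\<iota>+1"] upos udec unfolding M_def by auto
  have e2: "\<bar>(\<Sum>i<n-\<iota>. (-1)^i * v i) - (\<Sum>i<M. (-1)^i * v i)\<bar> \<le> v M"
    using alt_tail[of v M "n-\<iota>"] vpos vdec unfolding M_def by auto
  have e3: "\<bar>A y - (\<Sum>i<M. (-1)^i * aa y i)\<bar> \<le> aa y M" using A_tail[OF y01] .
  have P: "(\<Sum>i<M. (-1)^i * aa y i) = (\<Sum>i<M. (-1)^i * u i) + (\<Sum>i<M. (-1)^i * v i)"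
    by (simp add: uv[symmetric] sum.distrib distrib_left)
  have Dn: "D n x / real n = (-1)^\<iota> * ((\<Sum>i<\<iota>+1. (-1)^i * u i) + (\<Sum>i<n-\<iota>. (-1)^i * v i))"
    using Dsum split U V by (simp add: distrib_left)
  have "\<bar>D n x / real n - (-1)^\<iota> * A y\<bar>
      = \<bar>(\<Sum>i<\<iota>+1. (-1)^i * u i) + (\<Sum>i<n-\<iota>. (-1)^i * v i) - A y\<bar>"
    unfolding Dn by (simp add: right_diff_distrib[symmetric] abs_mult power_abs)
  also have "\<dots> \<le> 2 / real M"
  proof -
    have "1/(2*real M) + 1/(2*real M) + 1/real M = 2/real M" by simp
    moreover have "\<bar>(\<Sum>i<\<iota>+1. (-1)^i * u i) + (\<Sum>i<n-\<iota>. (-1)^i * v i) - A y\<bar> \<le> u M + v M + aa y M"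
      using tri3[OF e1 e2 e3 P] .
    ultimately show ?thesis using uM vM aM by linarith
  qed
  also have "\<dots> \<le> 4 * real q / real n"
  proof -
    have "0 < real n / (2 * real q)" using n qpos by simp
    hence "2 / real M \<le> 2 / (real n / (2 * real q))"
      using divide_left_mono[OF Mbound, of 2] M1 \<open>0 < real n / (2 * real q)\<close>
      by (simp add: mult_pos_pos del: times_divide_eq_right)
    thus ?thesis using qpos by (simp add: field_simps)
  qed
  finally show ?thesis using mq rhom rho2 unfolding y_def \<iota>_def by auto
qed

lemma fin_ev:
  fixes b :: "nat \<Rightarrow> real"
  assumes "finite V" "eventually (\<lambda>j. b j \<in> V) sequentially" "b \<longlonglongrightarrow> l"
  shows "eventually (\<lambda>j. b j = l) sequentially"
proof -
  have "\<forall>v\<in>V-{l}. eventually (\<lambda>j. dist (b j) l < dist v l) sequentially"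
    using tendstoD[OF assms(3)] by auto
  hence "eventually (\<lambda>j. \<forall>v\<in>V-{l}. dist (b j) l < dist v l) sequentially"
    by (rule eventually_ball_finite[OF finite_Diff[OF assms(1)]])
  with assms(2) show ?thesis
  proof eventually_elim
    case (elim j)
    show ?case
    proof (rule ccontr)
      assume "b j \<noteq> l"
      hence "b j \<in> V - {l}" using elim by simp
      hence "dist (b j) l < dist (b j) l" using elim(2) by blast
      thus False by simp
    qed
  qed
qed

lemma neg1_pow: "(-1::real)^k \<in> {1,-1}"
  by (cases "even k") auto



theorem lemma8:
  fixes p q :: nat and x :: real and nj :: "nat \<Rightarrow> nat" and L :: ereal
  assumes "q \<noteq> 0"
    and "x = real p / real q - 1"
    and "x \<in> {-1<..<1}"
    and "strict_mono nj"
    and "regular_for x nj"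
    and "((\<lambda>j. ereal (D (nj j) x / real (nj j))) \<longlongrightarrow> L) sequentially"
  shows "\<bar>L\<bar> \<noteq> \<infinity> \<and>
    (\<exists>m::nat. m < q \<and> \<bar>real_of_ereal L\<bar> = A (real m ^ 2 / real q ^ 2) \<and>
      (\<exists>j0. \<forall>j\<ge>j0. (-1::real) ^ iota (nj j) x = sgn (real_of_ereal L) \<and>
                      \<bar>rho (nj j) x\<bar> = real m / real q))"
proof -
  note q = assms(1) and xdef = assms(2) and lim = assms(6)
  have xl: "-1 < x" and xu: "x < 1" using assms(3) by auto
  have qpos: "0 < real q" using q by simp
  obtain j0 where j0: "\<forall>j\<ge>j0. x \<notin> {node k (nj j) | k. k \<le> nj j}"
    using assms(5) unfolding regular_for_def by blast
  define J where "J = max j0 1"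
  have good: "nj j > 0 \<and> (\<forall>k\<le>nj j. x \<noteq> node k (nj j))" if "j \<ge> J" for j
  proof -
    have "j \<le> nj j" using seq_suble[OF assms(4)] .
    moreover have "j \<ge> 1" "j \<ge> j0" using that unfolding J_def by auto
    ultimately show ?thesis using j0 by auto
  qed
  have "\<forall>j. \<exists>m. J \<le> j \<longrightarrow> (m<q \<and> \<bar>rho (nj j) x\<bar> = real m / real q \<and>
     \<bar>D (nj j) x / real (nj j) - (-1)^iota (nj j) x * A (real m^2/real q^2)\<bar> \<le> 4 * real q / real (nj j))"
  proof
    fix j
    show "\<exists>m. J \<le> j \<longrightarrow> (m<q \<and> \<bar>rho (nj j) x\<bar> = real m / real q \<and>
     \<bar>D (nj j) x / real (nj j) - (-1)^iota (nj j) x * A (real m^2/real q^2)\<bar> \<le> 4 * real q / real (nj j))"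
    proof (cases "J \<le> j")
      case True
      have g1: "nj j > 0" and g2: "\<forall>k\<le>nj j. x \<noteq> node k (nj j)" using good[OF True] by auto
      obtain m where "m<q \<and> \<bar>rho (nj j) x\<bar> = real m / real q \<and>
        \<bar>D (nj j) x / real (nj j) - (-1)^iota (nj j) x * A (real m^2/real q^2)\<bar> \<le> 4 * real q / real (nj j)"
        using main_est[OF q xdef xl xu g1 g2] by blast
      thus ?thesis by blast
    qed simp
  qed
  from choice[OF this] obtain mm where mm0: "\<forall>j. J \<le> j \<longrightarrow> (mm j < q \<and> \<bar>rho (nj j) x\<bar> = real (mm j) / real q \<and>
     \<bar>D (nj j) x / real (nj j) - (-1)^iota (nj j) x * A (real (mm j)^2/real q^2)\<bar> \<le> 4 * real q / real (nj j))"
    by blast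
  have mm: "mm j < q \<and> \<bar>rho (nj j) x\<bar> = real (mm j) / real q \<and>
     \<bar>D (nj j) x / real (nj j) - (-1)^iota (nj j) x * A (real (mm j)^2/real q^2)\<bar> \<le> 4 * real q / real (nj j)"
    if "J \<le> j" for j using mm0 that by blast
  define gg where "gg j = D (nj j) x / real (nj j)" for j
  define b where "b j = (-1::real)^iota (nj j) x * A (real (mm j)^2/real q^2)" for j
  define V where "V = (\<lambda>(c,m). c * A (real m^2/real q^2)) ` ({1::real,-1} \<times> {..<q})"
  have finV: "finite V" unfolding V_def by simp
  have bV: "b j \<in> V" if "J \<le> j" for j
    unfolding b_def V_def
    by (rule image_eqI[where x="((-1)^iota (nj j) x, mm j)"]) (use mm[OF that] neg1_pow[of "iota (nj j) x"] in auto)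
  define Bd where "Bd = Max (abs ` V)"
  have bB: "\<bar>b j\<bar> \<le> Bd" if "J \<le> j" for j
    unfolding Bd_def using bV[OF that] finV by (auto intro: Max_ge)
  have ninf: "filterlim (\<lambda>j. real (nj j)) at_infinity sequentially"
    by (rule filterlim_at_top_imp_at_infinity,
        rule filterlim_compose[OF filterlim_real_sequentially filterlim_subseq[OF assms(4)]])
  have r0: "(\<lambda>j. 4 * real q / real (nj j)) \<longlonglongrightarrow> 0"
    by (rule tendsto_divide_0[OF tendsto_const ninf])
  have err: "(\<lambda>j. gg j - b j) \<longlonglongrightarrow> 0"
  proof (rule Lim_null_comparison[OF _ r0])
    show "\<forall>\<^sub>F j in sequentially. norm (gg j - b j) \<le> 4 * real q / real (nj j)"
      unfolding eventually_sequentially gg_def b_def using mm by auto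
  qed
  define c where "c = Bd + 4 * real q + 1"
  have gB: "\<forall>\<^sub>F j in sequentially. \<bar>gg j\<bar> < c"
    unfolding eventually_sequentially
  proof (intro exI allI impI)
    fix j assume j: "J \<le> j"
    have n1: "1 \<le> real (nj j)" using good[OF j] by simp
    have "4 * real q / real (nj j) \<le> 4 * real q" using n1 qpos
      by (simp add: divide_le_eq mult_le_cancel_left1)
    thus "\<bar>gg j\<bar> < c" using mm[OF j] bB[OF j] unfolding c_def gg_def b_def by linarith
  qed
  have Lne1: "L \<noteq> \<infinity>"
  proof
    assume "L = \<infinity>"
    hence "\<forall>\<^sub>F j in sequentially. ereal c < ereal (gg j)"
      using order_tendstoD(1)[OF lim, of "ereal c"] unfolding gg_def by simp
    hence "\<forall>\<^sub>F j in sequentially. False" using gB by eventually_elim auto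
    thus False by simp
  qed
  have Lne2: "L \<noteq> -\<infinity>"
  proof
    assume "L = -\<infinity>"
    hence "\<forall>\<^sub>F j in sequentially. ereal (gg j) < ereal (-c)"
      using order_tendstoD(2)[OF lim, of "ereal (-c)"] unfolding gg_def by simp
    hence "\<forall>\<^sub>F j in sequentially. False" using gB by eventually_elim auto
    thus False by simp
  qed
  then obtain l where Ll: "L = ereal l" using Lne1 by (cases L) auto
  have glim: "gg \<longlonglongrightarrow> l" using lim unfolding Ll gg_def by simp
  have blim: "b \<longlonglongrightarrow> l" using tendsto_diff[OF glim err] by simp
  have "eventually (\<lambda>j. b j = l) sequentially"
    by (rule fin_ev[OF finV _ blim]) (auto simp: eventually_sequentially intro: bV)
  then obtain j1 where j1: "\<And>j. j \<ge> j1 \<Longrightarrow> b j = l" by (auto simp: eventually_sequentially)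
  define j2 where "j2 = max j1 J"
  define m where "m = mm j2"
  have Apos: "0 < A (real k^2/real q^2)" if "k < q" for k
  proof (rule A_pos)
    have "real k < real q" using that by simp
    hence "real k ^2 < real q ^2" by (intro power_strict_mono) auto
    thus "real k^2/real q^2 < 1" using qpos by simp
  qed simp
  have key: "(-1::real)^iota (nj j) x = sgn l \<and> \<bar>l\<bar> = A (real (mm j)^2/real q^2)" if "j \<ge> j2" for j
  proof -
    have jJ: "J \<le> j" "j1 \<le> j" using that unfolding j2_def by auto
    have e: "l = (-1::real)^iota (nj j) x * A (real (mm j)^2/real q^2)"
      using j1[OF jJ(2)] unfolding b_def by simp
    have ap: "0 < A (real (mm j)^2/real q^2)" using Apos mm[OF jJ(1)] by blast
    show ?thesis using neg1_pow[of "iota (nj j) x"] e ap by (auto simp: sgn_mult)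
  qed
  have mq: "m < q" unfolding m_def using mm[of j2] unfolding j2_def by simp
  have mj: "mm j = m" if "j \<ge> j2" for j
  proof -
    have jJ: "J \<le> j" using that unfolding j2_def by auto
    have mjq: "mm j < q" using mm[OF jJ] by simp
    have eq: "A (real (mm j)^2/real q^2) = A (real m^2/real q^2)"
      using key[OF that] key[of j2] unfolding m_def by simp
    have inj: "real k^2/real q^2 < 1" "0 \<le> real k^2/real q^2" if "k < q" for k
    proof -
      have "real k < real q" using that by simp
      hence "real k ^2 < real q ^2" by (intro power_strict_mono) auto
      thus "real k^2/real q^2 < 1" using qpos by simp
    qed simp
    have "real (mm j)^2/real q^2 = real m^2/real q^2"
    proof (rule ccontr)
      assume ne: "real (mm j)^2/real q^2 \<noteq> real m^2/real q^2"
      show False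
      proof (cases "real (mm j)^2/real q^2 < real m^2/real q^2")
        case True thus False using A_mono[OF inj(2)[OF mjq] True inj(1)[OF mq]] eq by simp
      next
        case False
        hence "real m^2/real q^2 < real (mm j)^2/real q^2" using ne by linarith
        thus False using A_mono[OF inj(2)[OF mq] _ inj(1)[OF mjq]] eq by simp
      qed
    qed
    hence "real (mm j)^2 = real m^2" using qpos by (simp add: divide_cancel_right)
    hence "real (mm j) = real m" by (simp add: power2_eq_iff_nonneg)
    thus ?thesis by simp
  qed
  show ?thesis
  proof (intro conjI exI)
    show "\<bar>L\<bar> \<noteq> \<infinity>" using Ll by simp
    show "m < q" by (rule mq)
    show "\<bar>real_of_ereal L\<bar> = A (real m ^ 2 / real q ^ 2)"
      using key[of j2] unfolding Ll m_def by simp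
    show "\<forall>j\<ge>j2. (-1::real) ^ iota (nj j) x = sgn (real_of_ereal L) \<and> \<bar>rho (nj j) x\<bar> = real m / real q"
    proof (intro allI impI conjI)
      fix j assume j: "j2 \<le> j"
      show "(-1::real) ^ iota (nj j) x = sgn (real_of_ereal L)" using key[OF j] Ll by simp
      have "J \<le> j" using j unfolding j2_def by auto
      thus "\<bar>rho (nj j) x\<bar> = real m / real q" using mm[OF \<open>J \<le> j\<close>] mj[OF j] by simp
    qed
  qed
qed

end
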